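(* Let $G$ be a Whitney-maximum graph in $\mathcal{C}_{n,m}$. Then: (a) for every $k\in\{1,\ldots,n\}$, $G$ is $k$-uniformly most reliable, i.e. $R_G^{(k)}(p)\ge R_H^{(k)}(p)$ for all $H\in\mathcal{C}_{n,m}$ and all $p\in[0,1]$; (b) for every $k\in\{1,\ldots,n-1\}$, $\lambda^{(k)}(G)\ge\lambda^{(k)}(H)$ for all $H\in\mathcal{C}_{n,m}$; (c) for every $k\in\{1,\ldots,n\}$, $t_k(G)\ge t_k(H)$ for all $H\in\mathcal{C}_{n,m}$.
   Context: $\mathcal{C}_{n,m}$ denotes the set of all connected simple graphs on $n$ vertices and $m$ edges. For a graph $G$ with vertex set $V$, $\kappa(G)$ is its number of connected components, $r(G)=|V|-\kappa(G)$, $c(G)=|E(G)|-|V|+\kappa(G)$. $\mathcal{S}(G)$ is the set of all spanning subgraphs of $G$. The Whitney polynomial is $W_G(x,y)=\sum_{H\in\mathcal{S}(G)}x^{r(G)-r(H)}y^{c(H)}$. A bivariate polynomial is nonnegative if all its coefficients are nonnegative real numbers. $G\in\mathcal{C}_{n,m}$ is Whitney-maximum if for every $H\in\mathcal{C}_{n,m}$ there is a nonnegative polynomial $Q_H$ with $W_G(x,y)-W_H(x,y)=(1-xy)Q_H(x,y)$. $N_i^{(k)}(G)$ is the number of spanning subgraphs of $G$ with exactly $i$ edges and at most $k$ connected components. The $k$-reliability $R_G^{(k)}(p)=\sum_{i=0}^m N_i^{(k)}(G)p^i(1-p)^{m-i}$ is the probability that $G$ has at most $k$ connected components when each edge is independently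 retained with probability $p$. The $k$-order edge connectivity $\lambda^{(k)}(G)$ is the minimum number of edges whose removal from $G$ yields a spanning subgraph with more than $k$ connected components. $t_k(G)$ is the number of spanning forests of $G$ consisting of exactly $k$ trees. *)

theory Defs
  imports Main "HOL.Real"
begin

text \<open>Simple graphs on the vertex set {0..<n}; edges are 2-element vertex sets.
  A spanning subgraph of (V,E) is given by an edge set F \<subseteq> E.\<close>

definition simple_graph :: "nat set \<Rightarrow> nat set set \<Rightarrow> bool" where
  "simple_graph V E \<longleftrightarrow> finite V \<and>
     (\<forall>e\<in>E. \<exists>u v. e = {u, v} \<and> u \<noteq> v \<and> u \<in> V \<and> v \<in> V)"

definition adj :: "nat set set \<Rightarrow> nat \<Rightarrow> nat \<Rightarrow> bool" where
  "adj F u v \<longleftrightarrow> {u, v} \<in> F"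

definition reach :: "nat set set \<Rightarrow> nat \<Rightarrow> nat \<Rightarrow> bool" where
  "reach F = (adj F)\<^sup>*\<^sup>*"

definition kappa :: "nat set \<Rightarrow> nat set set \<Rightarrow> nat" where
  "kappa V F = card ((\<lambda>v. {u\<in>V. reach F v u}) ` V)"

definition connected_graph :: "nat set \<Rightarrow> nat set set \<Rightarrow> bool" where
  "connected_graph V E \<longleftrightarrow> (\<forall>u\<in>V. \<forall>v\<in>V. reach E u v)"

definition Cnm :: "nat \<Rightarrow> nat \<Rightarrow> nat set set set" where
  "Cnm n m = {E. simple_graph {0..<n} E \<and> card E = m \<and> connected_graph {0..<n} E}"

definition rk :: "nat set \<Rightarrow> nat set set \<Rightarrow> nat" where
  "rk V F = card V - kappa V F"

text \<open>cyclomatic number c(H) = |E(H)| - |V| + \<kappa>(H) (always \<ge> 0)\<close>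
definition cyc :: "nat set \<Rightarrow> nat set set \<Rightarrow> nat" where
  "cyc V F = card F + kappa V F - card V"

text \<open>Coefficient of x^i y^j in the Whitney polynomial W_G(x,y)
  = sum over spanning subgraphs H of x^(r(G)-r(H)) y^(c(H)).\<close>
definition whitney_coeff :: "nat set \<Rightarrow> nat set set \<Rightarrow> nat \<Rightarrow> nat \<Rightarrow> nat" where
  "whitney_coeff V E i j =
     card {F. F \<subseteq> E \<and> rk V E - rk V F = i \<and> cyc V F = j}"

text \<open>Whitney-maximum: W_G - W_H = (1 - xy) Q_H with Q_H a (finitely supported,
  i.e. polynomial) coefficient array with nonnegative real coefficients.
  The coefficient of x^i y^j in (1-xy)Q is Q i j - Q (i-1) (j-1).\<close>
definition whitney_maximum :: "nat \<Rightarrow> nat \<Rightarrow> nat set set \<Rightarrow> bool" where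
  "whitney_maximum n m G \<longleftrightarrow> G \<in> Cnm n m \<and>
     (\<forall>H\<in>Cnm n m. \<exists>Q :: nat \<Rightarrow> nat \<Rightarrow> real.
        finite {(i, j). Q i j \<noteq> 0} \<and> (\<forall>i j. Q i j \<ge> 0) \<and>
        (\<forall>i j. real (whitney_coeff {0..<n} G i j) - real (whitney_coeff {0..<n} H i j)
               = Q i j - (if 0 < i \<and> 0 < j then Q (i - 1) (j - 1) else 0)))"

definition Nik :: "nat set \<Rightarrow> nat set set \<Rightarrow> nat \<Rightarrow> nat \<Rightarrow> nat" where
  "Nik V E k i = card {F. F \<subseteq> E \<and> card F = i \<and> kappa V F \<le> k}"

definition k_reliability :: "nat set \<Rightarrow> nat set set \<Rightarrow> nat \<Rightarrow> real \<Rightarrow> real" where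
  "k_reliability V E k p =
     (\<Sum>i = 0..card E. real (Nik V E k i) * p ^ i * (1 - p) ^ (card E - i))"

definition edge_conn_k :: "nat set \<Rightarrow> nat set set \<Rightarrow> nat \<Rightarrow> nat" where
  "edge_conn_k V E k = Min {card S | S. S \<subseteq> E \<and> kappa V (E - S) > k}"

text \<open>A forest: no edge lies on a cycle, i.e. the endpoints of each edge are
  disconnected after removing that edge.\<close>
definition forest :: "nat set set \<Rightarrow> bool" where
  "forest F \<longleftrightarrow> (\<forall>u v. {u, v} \<in> F \<longrightarrow> \<not> reach (F - {{u, v}}) u v)"

definition t_k :: "nat set \<Rightarrow> nat set set \<Rightarrow> nat \<Rightarrow> nat" where
  "t_k V E k = card {F. F \<subseteq> E \<and> forest F \<and> kappa V F = k}"

end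

theory Submission
  imports Defs
begin


lemma adj_sym: "adj F u v = adj F v u"
  by (simp add: adj_def insert_commute)

lemma reach_refl[simp]: "reach F x x"
  by (simp add: reach_def)

lemma reach_trans: "reach F x y \<Longrightarrow> reach F y z \<Longrightarrow> reach F x z"
  unfolding reach_def by (rule rtranclp_trans)

lemma reach_sym: "reach F x y \<Longrightarrow> reach F y x"
  unfolding reach_def
proof (induction rule: rtranclp_induct)
  case base then show ?case by simp
next
  case (step y z)
  have "(adj F)\<^sup>*\<^sup>* z y" using step(2) adj_sym by (metis r_into_rtranclp)
  then show ?case using step(3) by (rule rtranclp_trans)
qed

lemma reach_mono: "F \<subseteq> F' \<Longrightarrow> reach F x y \<Longrightarrow> reach F' x y"
proof -
  assume "F \<subseteq> F'" "reach F x y"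
  then have "adj F \<le> adj F'" by (auto simp: adj_def)
  then show ?thesis using \<open>reach F x y\<close> unfolding reach_def by (metis rtranclp_mono predicate2D)
qed

lemma reach_edge: "{u,v} \<in> F \<Longrightarrow> reach F u v"
  unfolding reach_def by (rule r_into_rtranclp) (simp add: adj_def)

lemma reach_empty: "reach {} x y \<longleftrightarrow> x = y"
proof
  assume "reach {} x y"
  then have "(adj {})\<^sup>*\<^sup>* x y" by (simp add: reach_def)
  then show "x = y" by (induction rule: rtranclp_induct) (auto simp: adj_def)
qed simp

lemma reach_insert:
  "reach (insert {u,v} F) x y \<longleftrightarrow>
     reach F x y \<or> (reach F x u \<and> reach F v y) \<or> (reach F x v \<and> reach F u y)"
proof
  assume "reach (insert {u,v} F) x y"
  then have "(adj (insert {u,v} F))\<^sup>*\<^sup>* x y" by (simp add: reach_def)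
  then show "reach F x y \<or> (reach F x u \<and> reach F v y) \<or> (reach F x v \<and> reach F u y)"
  proof (induction rule: rtranclp_induct)
    case base then show ?case by simp
  next
    case (step y z)
    from step(2) have "{y,z} = {u,v} \<or> {y,z} \<in> F" by (simp add: adj_def)
    then show ?case
    proof
      assume "{y,z} = {u,v}"
      then have "(y = u \<and> z = v) \<or> (y = v \<and> z = u)" by (simp add: doubleton_eq_iff)
      then show ?case using step(3) by auto
    next
      assume "{y,z} \<in> F"
      then have e: "reach F y z" by (rule reach_edge)
      show ?case using step(3) e reach_trans by blast
    qed
  qed
next
  have uv: "reach (insert {u,v} F) u v" by (rule reach_edge) simp
  have vu: "reach (insert {u,v} F) v u" by (rule reach_edge) (simp add: insert_commute)
  have m: "\<And>a b. reach F a b \<Longrightarrow> reach (insert {u,v} F) a b"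
    by (erule reach_mono[rotated]) auto
  assume "reach F x y \<or> (reach F x u \<and> reach F v y) \<or> (reach F x v \<and> reach F u y)"
  then show "reach (insert {u,v} F) x y" using uv vu m reach_trans by blast
qed

lemma kappa_same:
  assumes "reach F u v"
  shows "kappa V (insert {u,v} F) = kappa V F"
proof -
  have "reach (insert {u,v} F) = reach F"
    using assms by (intro ext) (meson reach_insert reach_sym reach_trans)
  then show ?thesis by (simp add: kappa_def)
qed

lemma kappa_merge:
  assumes fin: "finite V" and uV: "u \<in> V" and vV: "v \<in> V" and nr: "\<not> reach F u v"
  shows "kappa V F = kappa V (insert {u,v} F) + 1"
proof -
  define c where "c = (\<lambda>x. {y\<in>V. reach F x y})"
  define c' where "c' = (\<lambda>x. {y\<in>V. reach (insert {u,v} F) x y})"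
  define U where "U = c u \<union> c v"
  define A where "A = c ` (V - U)"
  have memc: "y \<in> c x \<longleftrightarrow> y \<in> V \<and> reach F x y" for x y by (simp add: c_def)
  have ceq: "reach F a b \<Longrightarrow> c a = c b" for a b
    unfolding c_def using reach_sym reach_trans by blast
  have c'U: "c' x = U" if "x \<in> V" "x \<in> U" for x
  proof -
    have xu: "reach F x u \<or> reach F x v" using that by (auto simp: U_def memc intro: reach_sym)
    show ?thesis
    proof (cases "reach F x u")
      case True
      then have "\<not> reach F x v" using nr reach_sym reach_trans by blast
      then show ?thesis using True unfolding c'_def U_def c_def reach_insert
        using reach_sym reach_trans by blast
    next
      case False
      then have "reach F x v" using xu by simp
      then show ?thesis using False unfolding c'_def U_def c_def reach_insert
        using reach_sym reach_trans by blast
    qed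
  qed
  have c'A: "c' x = c x" if "x \<in> V" "x \<notin> U" for x
  proof -
    have "\<not> reach F x u" "\<not> reach F x v" using that by (auto simp: U_def memc intro: reach_sym)
    then show ?thesis unfolding c'_def c_def reach_insert by blast
  qed
  have uU: "u \<in> U" by (simp add: U_def memc uV)
  have img': "c' ` V = insert U A"
  proof
    show "c' ` V \<subseteq> insert U A"
    proof
      fix X assume "X \<in> c' ` V"
      then obtain x where x: "x \<in> V" "X = c' x" by auto
      show "X \<in> insert U A"
      proof (cases "x \<in> U")
        case True then show ?thesis using x c'U by simp
      next
        case False then show ?thesis using x c'A by (auto simp: A_def)
      qed
    qed
    show "insert U A \<subseteq> c' ` V"
    proof
      fix X assume "X \<in> insert U A"
      then show "X \<in> c' ` V"
      proof
        assume "X = U" then show ?thesis using c'U[OF uV uU] uV by force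
      next
        assume "X \<in> A" then show ?thesis using c'A by (auto simp: A_def)
      qed
    qed
  qed
  have img: "c ` V = insert (c u) (insert (c v) A)"
  proof
    show "c ` V \<subseteq> insert (c u) (insert (c v) A)"
    proof
      fix X assume "X \<in> c ` V"
      then obtain x where x: "x \<in> V" "X = c x" by auto
      show "X \<in> insert (c u) (insert (c v) A)"
      proof (cases "x \<in> U")
        case True
        then have "reach F u x \<or> reach F v x" by (auto simp: U_def memc)
        then have "c x = c u \<or> c x = c v" using ceq by metis
        then show ?thesis using x by auto
      next
        case False then show ?thesis using x by (auto simp: A_def)
      qed
    qed
    show "insert (c u) (insert (c v) A) \<subseteq> c ` V" using uV vV by (auto simp: A_def)
  qed
  have notA: "X \<notin> A" if "\<exists>w\<in>{u,v}. w \<in> X \<and> X \<subseteq> U" for X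
  proof
    assume "X \<in> A"
    then obtain x where x: "x \<in> V" "x \<notin> U" "X = c x" by (auto simp: A_def)
    from that obtain w where w: "w \<in> {u,v}" "w \<in> X" by auto
    then have "reach F x w" using x by (simp add: memc)
    then have "reach F w x" by (rule reach_sym)
    then have "x \<in> U" using w x by (auto simp: U_def memc)
    then show False using x by simp
  qed
  have vU: "v \<in> U" by (simp add: U_def memc vV)
  have "U \<notin> A" using notA uU by blast
  moreover have "c u \<notin> A" using notA[of "c u"] uV by (auto simp: U_def memc)
  moreover have "c v \<notin> A" using notA[of "c v"] vV by (auto simp: U_def memc)
  moreover have "c u \<noteq> c v"
  proof -
    have "v \<in> c v" "v \<notin> c u" using nr vV by (simp_all add: memc)
    then show ?thesis by blast
  qed
  moreover have "finite A" using fin by (simp add: A_def)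
  ultimately have "card (c ` V) = card A + 2" "card (c' ` V) = card A + 1"
    unfolding img img' by (simp_all add: card_insert_disjoint)
  moreover have "kappa V F = card (c ` V)" "kappa V (insert {u,v} F) = card (c' ` V)"
    by (simp_all add: kappa_def c_def c'_def)
  ultimately show ?thesis by simp
qed



definition edges_in :: "nat set \<Rightarrow> nat set set \<Rightarrow> bool" where
  "edges_in V F \<longleftrightarrow> (\<forall>e\<in>F. \<exists>u v. e = {u, v} \<and> u \<noteq> v \<and> u \<in> V \<and> v \<in> V)"

lemma edges_in_subset: "edges_in V F \<Longrightarrow> F' \<subseteq> F \<Longrightarrow> edges_in V F'"
  unfolding edges_in_def by blast

lemma kappa_empty: "kappa V {} = card V"
proof -
  have "(\<lambda>v. {u\<in>V. reach {} v u}) ` V = (\<lambda>v. {v}) ` V"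
    by (intro image_cong refl) (auto simp: reach_empty)
  moreover have "card ((\<lambda>v. {v}) ` V) = card V" by (rule card_image) (auto simp: inj_on_def)
  ultimately show ?thesis by (simp add: kappa_def)
qed

lemma kappa_insert_ge:
  assumes "finite V" "u \<in> V" "v \<in> V"
  shows "kappa V F \<le> kappa V (insert {u,v} F) + 1"
  using kappa_same[of F u v V] kappa_merge[OF assms, of F] by (cases "reach F u v") auto

lemma card_kappa_ge:
  assumes "finite V" "finite F" "edges_in V F"
  shows "card V \<le> card F + kappa V F"
  using assms(2,3)
proof (induction F rule: finite_induct)
  case empty then show ?case by (simp add: kappa_empty)
next
  case (insert e F)
  then obtain u v where e: "e = {u,v}" "u \<in> V" "v \<in> V" by (auto simp: edges_in_def)
  have "edges_in V F" using insert.prems by (auto simp: edges_in_def)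
  then have "card V \<le> card F + kappa V F" using insert.IH by simp
  also have "\<dots> \<le> card F + kappa V (insert e F) + 1"
    using kappa_insert_ge[OF assms(1) e(2,3), of F] e(1) by simp
  also have "\<dots> = card (insert e F) + kappa V (insert e F)" using insert.hyps by simp
  finally show ?case .
qed

lemma forest_subset: "forest F' \<Longrightarrow> F \<subseteq> F' \<Longrightarrow> forest F"
  unfolding forest_def
proof (intro allI impI)
  fix u v assume f: "\<forall>u v. {u, v} \<in> F' \<longrightarrow> \<not> reach (F' - {{u, v}}) u v"
    and s: "F \<subseteq> F'" and e: "{u,v} \<in> F"
  show "\<not> reach (F - {{u, v}}) u v"
  proof
    assume "reach (F - {{u, v}}) u v"
    then have "reach (F' - {{u, v}}) u v" by (rule reach_mono[rotated]) (use s in blast)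
    then show False using f e s by blast
  qed
qed

lemma forest_count:
  assumes "finite V" "finite F" "edges_in V F" "forest F"
  shows "card F + kappa V F = card V"
  using assms(2,3,4)
proof (induction F rule: finite_induct)
  case empty then show ?case by (simp add: kappa_empty)
next
  case (insert e F)
  then obtain u v where e: "e = {u,v}" "u \<in> V" "v \<in> V" by (auto simp: edges_in_def)
  have "edges_in V F" using insert.prems by (auto simp: edges_in_def)
  moreover have "forest F" using insert.prems(2) by (rule forest_subset) auto
  ultimately have IH: "card F + kappa V F = card V" using insert.IH by simp
  have "\<not> reach (insert e F - {e}) u v" using insert.prems(2) e(1) by (auto simp: forest_def)
  moreover have "insert e F - {e} = F" using insert.hyps by auto
  ultimately have "\<not> reach F u v" by simp
  then have "kappa V F = kappa V (insert e F) + 1" using kappa_merge[OF assms(1) e(2,3)] e(1) by simp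
  then show ?case using IH insert.hyps by simp
qed

lemma nonforest_count:
  assumes "finite V" "finite F" "edges_in V F" "\<not> forest F"
  shows "card V < card F + kappa V F"
proof -
  obtain a b where ab: "{a,b} \<in> F" "reach (F - {{a,b}}) a b"
    using assms(4) by (auto simp: forest_def)
  define F0 where "F0 = F - {{a,b}}"
  have F: "F = insert {a,b} F0" using ab(1) by (auto simp: F0_def)
  have "reach F0 a b" using ab(2) by (simp add: F0_def)
  then have "kappa V (insert {a,b} F0) = kappa V F0" by (rule kappa_same)
  then have "kappa V F = kappa V F0" using F by simp
  moreover have "card F = card F0 + 1" using ab(1) assms(2) unfolding F0_def
    by (metis Suc_eq_plus1 card_Suc_Diff1)
  moreover have "card V \<le> card F0 + kappa V F0"
    using card_kappa_ge[OF assms(1)] assms(2,3) edges_in_subset F0_def by auto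
  ultimately show ?thesis by simp
qed

lemma forest_iff:
  assumes "finite V" "finite F" "edges_in V F"
  shows "forest F \<longleftrightarrow> card F + kappa V F = card V"
  using forest_count[OF assms] nonforest_count[OF assms] by fastforce

lemma kappa_pos: "finite V \<Longrightarrow> V \<noteq> {} \<Longrightarrow> 1 \<le> kappa V F"
  unfolding kappa_def by (simp add: Suc_leI card_gt_0_iff)

lemma kappa_le: "finite V \<Longrightarrow> kappa V F \<le> card V"
  unfolding kappa_def by (rule card_image_le)

lemma kappa_conn: "V \<noteq> {} \<Longrightarrow> connected_graph V E \<Longrightarrow> kappa V E = 1"
proof -
  assume ne: "V \<noteq> {}" and c: "connected_graph V E"
  have "(\<lambda>v. {u\<in>V. reach E v u}) ` V = {V}"
    using ne c by (auto simp: connected_graph_def)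
  then show ?thesis by (simp add: kappa_def)
qed

lemma telescope:
  fixes d Q :: "nat \<Rightarrow> nat \<Rightarrow> real"
  assumes dq: "\<forall>a b. d a b = Q a b - (if 0 < a \<and> 0 < b then Q (a-1) (b-1) else 0)"
  shows "(\<Sum>\<kappa>=1..k. (if n \<le> i + \<kappa> then d (\<kappa>-1) (i+\<kappa>-n) else 0))
         = (if n \<le> i + k \<and> 1 \<le> k then Q (k-1) (i+k-n) else 0)"
proof (induction k)
  case 0 then show ?case by simp
next
  case (Suc k)
  show ?case
  proof (cases "n \<le> i + Suc k")
    case False then show ?thesis using Suc by simp
  next
    case True
    have "d k (i + Suc k - n) = Q k (i + Suc k - n)
      - (if n \<le> i + k \<and> 1 \<le> k then Q (k-1) (i+k-n) else 0)"
    proof -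
      have "(0 < k \<and> 0 < i + Suc k - n) = (n \<le> i + k \<and> 1 \<le> k)" using True by auto
      moreover have "i + Suc k - n - 1 = i + k - n" using True by simp
      ultimately show ?thesis using dq by simp
    qed
    then show ?thesis using Suc True by simp
  qed
qed



lemma Cnm_props:
  assumes "E \<in> Cnm n m"
  shows "edges_in {0..<n} E" "finite E" "card E = m" "connected_graph {0..<n} E"
proof -
  show ei: "edges_in {0..<n} E" using assms by (simp add: Cnm_def simple_graph_def edges_in_def)
  have "E \<subseteq> Pow {0..<n}" using ei by (auto simp: edges_in_def)
  then show "finite E" by (rule finite_subset) simp
  show "card E = m" "connected_graph {0..<n} E" using assms by (simp_all add: Cnm_def)
qed

lemma sub_facts:
  assumes "E \<in> Cnm n m" "1 \<le> n" "F \<subseteq> E"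
  shows "1 \<le> kappa {0..<n} F" "kappa {0..<n} F \<le> n" "n \<le> card F + kappa {0..<n} F"
    "finite F" "edges_in {0..<n} F"
    "rk {0..<n} E - rk {0..<n} F = kappa {0..<n} F - 1"
    "cyc {0..<n} F = card F + kappa {0..<n} F - n"
proof -
  show k1: "1 \<le> kappa {0..<n} F" using assms(2) by (intro kappa_pos) auto
  show k2: "kappa {0..<n} F \<le> n" using kappa_le[of "{0..<n}" F] by simp
  show fF: "finite F" using Cnm_props(2)[OF assms(1)] assms(3) by (rule finite_subset[rotated])
  show eF: "edges_in {0..<n} F" using Cnm_props(1)[OF assms(1)] assms(3) by (rule edges_in_subset)
  show "n \<le> card F + kappa {0..<n} F" using card_kappa_ge[OF _ fF eF] by simp
  have "kappa {0..<n} E = 1" using assms(2) Cnm_props(4)[OF assms(1)] by (intro kappa_conn) auto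
  then show "rk {0..<n} E - rk {0..<n} F = kappa {0..<n} F - 1"
    using k1 k2 by (simp add: rk_def)
  show "cyc {0..<n} F = card F + kappa {0..<n} F - n" by (simp add: cyc_def)
qed

definition Ncnt :: "nat set \<Rightarrow> nat set set \<Rightarrow> nat \<Rightarrow> nat \<Rightarrow> nat" where
  "Ncnt V E i j = card {F. F \<subseteq> E \<and> card F = i \<and> kappa V F = j}"

lemma Nik_split:
  assumes "E \<in> Cnm n m" "1 \<le> n"
  shows "Nik {0..<n} E k i = (\<Sum>j=1..k. Ncnt {0..<n} E i j)"
proof -
  have fE: "finite E" by (rule Cnm_props(2)[OF assms(1)])
  have "{F. F \<subseteq> E \<and> card F = i \<and> kappa {0..<n} F \<le> k}
      = (\<Union>j\<in>{1..k}. {F. F \<subseteq> E \<and> card F = i \<and> kappa {0..<n} F = j})"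
    using sub_facts(1)[OF assms] by auto
  moreover have "card (\<Union>j\<in>{1..k}. {F. F \<subseteq> E \<and> card F = i \<and> kappa {0..<n} F = j})
      = (\<Sum>j=1..k. card {F. F \<subseteq> E \<and> card F = i \<and> kappa {0..<n} F = j})"
  proof (rule card_UN_disjoint)
    show "finite {1..k}" by simp
    show "\<forall>j\<in>{1..k}. finite {F. F \<subseteq> E \<and> card F = i \<and> kappa {0..<n} F = j}"
      using fE by (auto intro: finite_subset[of _ "Pow E"])
    show "\<forall>j\<in>{1..k}. \<forall>l\<in>{1..k}. j \<noteq> l \<longrightarrow>
      {F. F \<subseteq> E \<and> card F = i \<and> kappa {0..<n} F = j} \<inter> {F. F \<subseteq> E \<and> card F = i \<and> kappa {0..<n} F = l} = {}"
      by auto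
  qed
  ultimately show ?thesis by (simp add: Nik_def Ncnt_def)
qed

lemma Ncnt_w:
  assumes "E \<in> Cnm n m" "1 \<le> n" "1 \<le> j"
  shows "Ncnt {0..<n} E i j = (if n \<le> i + j then whitney_coeff {0..<n} E (j-1) (i+j-n) else 0)"
proof (cases "n \<le> i + j")
  case True
  have "{F. F \<subseteq> E \<and> card F = i \<and> kappa {0..<n} F = j}
     = {F. F \<subseteq> E \<and> rk {0..<n} E - rk {0..<n} F = j - 1 \<and> cyc {0..<n} F = i + j - n}"
  proof (rule Collect_cong)
    fix F
    show "(F \<subseteq> E \<and> card F = i \<and> kappa {0..<n} F = j) =
      (F \<subseteq> E \<and> rk {0..<n} E - rk {0..<n} F = j - 1 \<and> cyc {0..<n} F = i + j - n)"
    proof (cases "F \<subseteq> E")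
      case F: True
      note sf = sub_facts[OF assms(1,2) F]
      show ?thesis unfolding sf(6,7) using sf(1,3) True assms(3) F by auto
    qed simp
  qed
  then show ?thesis using True by (simp add: Ncnt_def whitney_coeff_def)
next
  case False
  have "{F. F \<subseteq> E \<and> card F = i \<and> kappa {0..<n} F = j} = {}"
    using sub_facts(3)[OF assms(1,2)] False by auto
  then show ?thesis using False unfolding Ncnt_def by (metis (no_types, lifting) card.empty)
qed

lemma tk_w:
  assumes "E \<in> Cnm n m" "1 \<le> n" "1 \<le> k"
  shows "t_k {0..<n} E k = whitney_coeff {0..<n} E (k-1) 0"
proof -
  have "{F. F \<subseteq> E \<and> forest F \<and> kappa {0..<n} F = k}
     = {F. F \<subseteq> E \<and> rk {0..<n} E - rk {0..<n} F = k - 1 \<and> cyc {0..<n} F = 0}"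
  proof (rule Collect_cong)
    fix F
    show "(F \<subseteq> E \<and> forest F \<and> kappa {0..<n} F = k) =
      (F \<subseteq> E \<and> rk {0..<n} E - rk {0..<n} F = k - 1 \<and> cyc {0..<n} F = 0)"
    proof (cases "F \<subseteq> E")
      case F: True
      note sf = sub_facts[OF assms(1,2) F]
      have fi: "forest F \<longleftrightarrow> card F + kappa {0..<n} F = n"
        using forest_iff[OF _ sf(4,5)] by simp
      show ?thesis unfolding sf(6,7) fi using sf(1,3) assms(3) F by auto
    qed simp
  qed
  then show ?thesis by (simp add: t_k_def whitney_coeff_def)
qed

lemma Nik_mono:
  assumes wm: "whitney_maximum n m G" and H: "H \<in> Cnm n m" and n1: "1 \<le> n"
  shows "Nik {0..<n} H k i \<le> Nik {0..<n} G k i"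
proof -
  have G: "G \<in> Cnm n m" using wm by (simp add: whitney_maximum_def)
  obtain Q where Q: "\<forall>i j. Q i j \<ge> 0"
    "\<forall>i j. real (whitney_coeff {0..<n} G i j) - real (whitney_coeff {0..<n} H i j)
               = Q i j - (if 0 < i \<and> 0 < j then Q (i - 1) (j - 1) else 0)"
    using wm H unfolding whitney_maximum_def by blast
  define d where "d a b = real (whitney_coeff {0..<n} G a b) - real (whitney_coeff {0..<n} H a b)" for a b
  have dq: "\<forall>a b. d a b = Q a b - (if 0 < a \<and> 0 < b then Q (a-1) (b-1) else 0)"
    using Q(2) by (simp add: d_def)
  have "real (Nik {0..<n} G k i) - real (Nik {0..<n} H k i)
      = (\<Sum>j=1..k. real (Ncnt {0..<n} G i j) - real (Ncnt {0..<n} H i j))"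
    by (simp add: Nik_split[OF G n1] Nik_split[OF H n1] sum_subtractf)
  also have "\<dots> = (\<Sum>j=1..k. (if n \<le> i + j then d (j-1) (i+j-n) else 0))"
    by (intro sum.cong refl) (simp add: Ncnt_w[OF G n1] Ncnt_w[OF H n1] d_def)
  also have "\<dots> = (if n \<le> i + k \<and> 1 \<le> k then Q (k-1) (i+k-n) else 0)"
    by (rule telescope[OF dq])
  also have "\<dots> \<ge> 0" using Q(1) by simp
  finally show ?thesis by simp
qed



theorem mainTheorem7:
  fixes n m :: nat and G :: "nat set set"
  assumes "whitney_maximum n m G"
  shows "(\<forall>k\<in>{1..n}. \<forall>H\<in>Cnm n m. \<forall>p::real. 0 \<le> p \<and> p \<le> 1 \<longrightarrow>
            k_reliability {0..<n} G k p \<ge> k_reliability {0..<n} H k p)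
       \<and> (\<forall>k\<in>{1..n-1}. \<forall>H\<in>Cnm n m. edge_conn_k {0..<n} G k \<ge> edge_conn_k {0..<n} H k)
       \<and> (\<forall>k\<in>{1..n}. \<forall>H\<in>Cnm n m. t_k {0..<n} G k \<ge> t_k {0..<n} H k)"
proof (cases "n = 0")
  case True then show ?thesis by simp
next
  case False
  then have n1: "1 \<le> n" by simp
  have G: "G \<in> Cnm n m" using assms by (simp add: whitney_maximum_def)
  have cG: "card G = m" by (rule Cnm_props(3)[OF G])
  have fG: "finite G" by (rule Cnm_props(2)[OF G])
  have A: "k_reliability {0..<n} G k p \<ge> k_reliability {0..<n} H k p"
    if H: "H \<in> Cnm n m" and p: "0 \<le> p" "p \<le> 1" for k H p
  proof -
    have cH: "card H = m" by (rule Cnm_props(3)[OF H])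
    show ?thesis unfolding k_reliability_def cG cH
    proof (rule sum_mono)
      fix i assume "i \<in> {0..m}"
      have "real (Nik {0..<n} H k i) \<le> real (Nik {0..<n} G k i)"
        using Nik_mono[OF assms H n1] by simp
      moreover have "0 \<le> p ^ i * (1 - p) ^ (m - i)" using p by simp
      ultimately have "real (Nik {0..<n} H k i) * (p ^ i * (1 - p) ^ (m - i))
         \<le> real (Nik {0..<n} G k i) * (p ^ i * (1 - p) ^ (m - i))"
        by (rule mult_right_mono)
      then show "real (Nik {0..<n} H k i) * p ^ i * (1 - p) ^ (m - i)
         \<le> real (Nik {0..<n} G k i) * p ^ i * (1 - p) ^ (m - i)"
        by (simp add: mult.assoc)
    qed
  qed
  have C: "t_k {0..<n} G k \<ge> t_k {0..<n} H k" if H: "H \<in> Cnm n m" and k: "1 \<le> k" for k H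
  proof -
    obtain Q where Q: "\<forall>i j. Q i j \<ge> 0"
      "\<forall>i j. real (whitney_coeff {0..<n} G i j) - real (whitney_coeff {0..<n} H i j)
                 = Q i j - (if 0 < i \<and> 0 < j then Q (i - 1) (j - 1) else 0)"
      using assms H unfolding whitney_maximum_def by blast
    have "real (whitney_coeff {0..<n} G (k-1) 0) - real (whitney_coeff {0..<n} H (k-1) 0) \<ge> 0"
      using Q by simp
    then show ?thesis using tk_w[OF G n1 k] tk_w[OF H n1 k] by simp
  qed
  have B: "edge_conn_k {0..<n} G k \<ge> edge_conn_k {0..<n} H k"
    if H: "H \<in> Cnm n m" and k: "1 \<le> k" "k \<le> n - 1" for k H
  proof (rule ccontr)
    assume "\<not> ?thesis"
    then have lt: "edge_conn_k {0..<n} G k < edge_conn_k {0..<n} H k" by simp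
    have cH: "card H = m" by (rule Cnm_props(3)[OF H])
    have fH: "finite H" by (rule Cnm_props(2)[OF H])
    have Smin: "edge_conn_k {0..<n} E k \<in> {card S |S. S \<subseteq> E \<and> kappa {0..<n} (E - S) > k}"
      "\<And>S. S \<subseteq> E \<Longrightarrow> kappa {0..<n} (E - S) > k \<Longrightarrow> edge_conn_k {0..<n} E k \<le> card S"
      if fE: "finite E" for E
    proof -
      let ?S = "{card S |S. S \<subseteq> E \<and> kappa {0..<n} (E - S) > k}"
      have "card E \<in> ?S" using k by (auto simp: kappa_empty intro!: exI[of _ E])
      moreover have "finite ?S"
      proof (rule finite_subset)
        show "?S \<subseteq> {..card E}" using fE by (auto intro: card_mono)
      qed simp
      ultimately show "edge_conn_k {0..<n} E k \<in> ?S"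
        unfolding edge_conn_k_def by (intro Min_in) auto
      show "\<And>S. S \<subseteq> E \<Longrightarrow> kappa {0..<n} (E - S) > k \<Longrightarrow> edge_conn_k {0..<n} E k \<le> card S"
        unfolding edge_conn_k_def using \<open>finite ?S\<close> by (intro Min_le) auto
    qed
    obtain S0 where S0: "S0 \<subseteq> G" "kappa {0..<n} (G - S0) > k" "card S0 = edge_conn_k {0..<n} G k"
      using Smin(1)[OF fG] by auto
    define s where "s = edge_conn_k {0..<n} G k"
    define i where "i = m - s"
    have sm: "s \<le> m" using S0 cG fG card_mono s_def by metis
    have H1: "Nik {0..<n} H k i = card {F. F \<subseteq> H \<and> card F = i}"
    proof -
      have "{F. F \<subseteq> H \<and> card F = i \<and> kappa {0..<n} F \<le> k} = {F. F \<subseteq> H \<and> card F = i}"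
      proof (intro Collect_cong iffI)
        fix F assume F: "F \<subseteq> H \<and> card F = i"
        show "F \<subseteq> H \<and> card F = i \<and> kappa {0..<n} F \<le> k"
        proof (rule ccontr)
          assume "\<not> ?thesis"
          then have kk: "kappa {0..<n} (H - (H - F)) > k" using F by (simp add: Diff_Diff_Int Int_absorb1)
          have "card (H - F) = s" 
          proof -
            have "finite F" using F fH finite_subset by blast
            then show ?thesis using F cH sm i_def card_Diff_subset by (metis diff_diff_cancel)
          qed
          then have "edge_conn_k {0..<n} H k \<le> s" using Smin(2)[OF fH _ kk] by auto
          then show False using lt s_def by simp
        qed
      qed auto
      then show ?thesis by (simp add: Nik_def)
    qed
    have G1: "Nik {0..<n} G k i < card {F. F \<subseteq> G \<and> card F = i}"
      unfolding Nik_def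
    proof (rule psubset_card_mono)
      show "finite {F. F \<subseteq> G \<and> card F = i}" using fG by (auto intro: finite_subset[of _ "Pow G"])
      have "G - S0 \<in> {F. F \<subseteq> G \<and> card F = i}"
        using S0 fG cG i_def s_def by (auto simp: card_Diff_subset finite_subset)
      moreover have "G - S0 \<notin> {F. F \<subseteq> G \<and> card F = i \<and> kappa {0..<n} F \<le> k}" using S0 by auto
      ultimately show "{F. F \<subseteq> G \<and> card F = i \<and> kappa {0..<n} F \<le> k} \<subset> {F. F \<subseteq> G \<and> card F = i}"
        by blast
    qed
    have "card {F. F \<subseteq> G \<and> card F = i} = card {F. F \<subseteq> H \<and> card F = i}"
      using n_subsets[OF fG] n_subsets[OF fH] cG cH by simp
    then have "Nik {0..<n} G k i < Nik {0..<n} H k i" using G1 H1 unfolding Nik_def by simp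
    then show False using Nik_mono[OF assms H n1, of k i] by simp
  qed
  show ?thesis using A B C by auto
qed

end
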